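(* Let $\mathcal{P}_1,\mathcal{P}_2$ be finite posets. If $\mathbf{T}\in\mathcal{N}_{<\infty}$ is a matrix of rank two, then $\mathbf{T}$ has ND rank two.
   Context: For a finite poset $\mathcal{Q}$, the order cone $\mathcal{C}(\mathcal{Q})$ is the set of $\mathbf{f}\in\mathbb{R}^{\mathcal{Q}}$ with $f_x\ge0$ for all $x$ and $f_x\le f_y$ whenever $x\preceq y$. $\mathcal{N}_{<\infty}$ is the set of matrices in $\mathbb{R}^{\mathcal{P}_1\times\mathcal{P}_2}$ of the form $\sum_{i=1}^r\mathbf{a}_i\mathbf{b}_i^\intercal$ for some finite $r$ with $\mathbf{a}_i\in\mathcal{C}(\mathcal{P}_1)$, $\mathbf{b}_i\in\mathcal{C}(\mathcal{P}_2)$; the ND rank is the minimal such $r$. Rank means ordinary real matrix rank. *)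

theory Defs
  imports "HOL-Analysis.Analysis"
begin

text \<open>Vectors in R^Q are \<open>real^'q\<close>; matrices in R^(P1 x P2) are \<open>real^'p2^'p1\<close>
  (rows indexed by P1, columns by P2).\<close>

definition order_cone :: "(real^'q::{finite,order}) set" where
  "order_cone = {f. (\<forall>x. 0 \<le> f $ x) \<and> (\<forall>x y. x \<le> y \<longrightarrow> f $ x \<le> f $ y)}"

definition outer_prod :: "real^'m \<Rightarrow> real^'n \<Rightarrow> real^'n^'m" where
  "outer_prod a b = (\<chi> i j. a $ i * b $ j)"

definition nd_decomp ::
  "real^'p2::{finite,order}^'p1::{finite,order} \<Rightarrow> nat \<Rightarrow> bool" where
  "nd_decomp T r \<longleftrightarrow> (\<exists>a b. (\<forall>i<r. a i \<in> order_cone \<and> b i \<in> order_cone) \<and>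
       T = (\<Sum>i<r. outer_prod (a i) (b i)))"

definition N_fin :: "(real^'p2::{finite,order}^'p1::{finite,order}) set" where
  "N_fin = {T. \<exists>r. nd_decomp T r}"

definition nd_rank :: "real^'p2::{finite,order}^'p1::{finite,order} \<Rightarrow> nat" where
  "nd_rank T = (LEAST r. nd_decomp T r)"

end

theory Submission
  imports Defs
begin

lemma scal:
  fixes au bu aw bw ag bg P Q Lu Lw Lg tu tw X Y :: real
  assumes A1: "Lu = au*P + bu*Q" and A2: "Lw = aw*P + bw*Q" and A3: "Lg = ag*P+bg*Q"
   and A4: "tu = Q*bu/Lu" and A5: "tw = Q*bw/Lw" and A6: "Lu>0" and A7: "Lw>0" and A8: "P>0" and A9: "Q>0" and A10: "tu<tw"
   and A11: "X = (tw*Lg - Q*bg)/((tw-tu)*Lu)" and A12: "Y = (Q*bg - tu*Lg)/((tw-tu)*Lw)"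
 shows "X*au + Y*aw = ag \<and> X*bu+Y*bw = bg"
proof -
  have d: "tw - tu > 0" using A10 by simp
  have h1: "X*((tw-tu)*Lu) = tw*Lg - Q*bg" unfolding A11 using d A6 by simp
  have h2: "Y*((tw-tu)*Lw) = Q*bg - tu*Lg" unfolding A12 using d A7 by simp
  have h3: "Q*bu = tu*Lu" unfolding A4 using A6 by simp
  have h4: "Q*bw = tw*Lw" unfolding A5 using A7 by simp
  have "Q*(tw-tu)*(X*bu+Y*bw) = (tw-tu)*(X*(Q*bu) + Y*(Q*bw))" by algebra
  also have "\<dots> = (tw-tu)*(X*(tu*Lu) + Y*(tw*Lw))" by (simp only: h3 h4)
  also have "\<dots> = tu*(X*((tw-tu)*Lu)) + tw*(Y*((tw-tu)*Lw))" by algebra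
  also have "\<dots> = tu*(tw*Lg - Q*bg) + tw*(Q*bg - tu*Lg)" by (simp only: h1 h2)
  also have "\<dots> = Q*(tw-tu)*bg" by algebra
  finally have e1: "X*bu+Y*bw = bg" using d A9 by simp
  have h5: "P*au = Lu*(1-tu)" using A1 h3 by (simp add: algebra_simps)
  have h6: "P*aw = Lw*(1-tw)" using A2 h4 by (simp add: algebra_simps)
  have "P*(tw-tu)*(X*au+Y*aw) = (tw-tu)*(X*(P*au) + Y*(P*aw))" by algebra
  also have "\<dots> = (tw-tu)*(X*(Lu*(1-tu)) + Y*(Lw*(1-tw)))" by (simp only: h5 h6)
  also have "\<dots> = (1-tu)*(X*((tw-tu)*Lu)) + (1-tw)*(Y*((tw-tu)*Lw))" by algebra
  also have "\<dots> = (1-tu)*(tw*Lg - Q*bg) + (1-tw)*(Q*bg - tu*Lg)" by (simp only: h1 h2)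
  also have "\<dots> = (tw-tu)*(Lg - Q*bg)" by algebra
  also have "\<dots> = P*(tw-tu)*ag" unfolding A3 by algebra
  finally have e2: "X*au+Y*aw = ag" using d A8 by simp
  show ?thesis using e1 e2 by simp
qed

lemma cone_comb:
  fixes a :: "nat \<Rightarrow> real^'q::{finite,order}"
  assumes "\<forall>i<r. a i \<in> order_cone" "\<forall>i<r. d i \<ge> 0"
  shows "(\<chi> k. \<Sum>i<r. a i $ k * d i) \<in> order_cone"
proof -
  have "0 \<le> (\<Sum>i<r. a i $ k * d i)" for k
    using assms by (intro sum_nonneg) (auto simp: order_cone_def)
  moreover have "(\<Sum>i<r. a i $ x * d i) \<le> (\<Sum>i<r. a i $ y * d i)" if "x \<le> y" for x y
    using assms that by (intro sum_mono mult_right_mono) (auto simp: order_cone_def)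
  ultimately show ?thesis by (simp add: order_cone_def)
qed

lemma ell_pos:
  fixes x :: "real^'q::{finite,order}"
  assumes "x \<in> order_cone" "x \<noteq> 0"
  shows "(\<Sum>k\<in>UNIV. x $ k) > 0"
proof -
  obtain k where k: "x $ k \<noteq> 0" using assms(2) by (auto simp: vec_eq_iff)
  have nn: "\<forall>k. 0 \<le> x $ k" using assms(1) by (simp add: order_cone_def)
  have "0 < x $ k" using k nn by (metis less_eq_real_def)
  then show ?thesis using nn by (intro sum_pos2[where i=k]) auto
qed

lemma rank_outer_le1:
  fixes a :: "real^'m" and b :: "real^'n"
  shows "rank (outer_prod a b) \<le> 1"
proof -
  have "columns (outer_prod a b) \<subseteq> span {a}"
  proof
    fix c assume "c \<in> columns (outer_prod a b)"
    then obtain j where "c = column j (outer_prod a b)" by (auto simp: columns_def)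
    then have "c = (b $ j) *\<^sub>R a" by (simp add: column_def outer_prod_def vec_eq_iff mult.commute)
    then show "c \<in> span {a}" by (simp add: span_base span_scale)
  qed
  then have "dim (columns (outer_prod a b)) \<le> card {a}" by (rule dim_le_card) simp
  then show ?thesis by (simp add: column_rank_def)
qed

theorem theorem12:
  fixes T :: "real^'p2::{finite,order}^'p1::{finite,order}"
  assumes "T \<in> N_fin"
    and "rank T = 2"
  shows "nd_rank T = 2"
proof -
  obtain r where "nd_decomp T r" using assms(1) by (auto simp: N_fin_def)
  then obtain a b where ab: "\<forall>i<r. a i \<in> order_cone \<and> b i \<in> order_cone"
    and Tdef: "T = (\<Sum>i<r. outer_prod (a i) (b i))"
    unfolding nd_decomp_def by blast
  have Tent: "T $ k $ j = (\<Sum>i<r. a i $ k * b i $ j)" for k j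
    by (simp add: Tdef outer_prod_def)
  define c where "c j = column j T" for j
  have cent: "c j = (\<chi> k. \<Sum>i<r. a i $ k * b i $ j)" for j
    by (simp add: c_def column_def Tent)
  have bnn: "\<forall>i<r. b i $ j \<ge> 0" for j using ab by (simp add: order_cone_def)
  have c_cone: "c j \<in> order_cone" for j
    unfolding cent using ab bnn by (intro cone_comb) auto
  have cd_cone: "c j' - c j \<in> order_cone" if "j \<le> j'" for j j'
  proof -
    have "c j' - c j = (\<chi> k. \<Sum>i<r. a i $ k * (b i $ j' - b i $ j))"
      by (simp add: cent vec_eq_iff algebra_simps sum_subtractf)
    moreover have "\<forall>i<r. b i $ j' - b i $ j \<ge> 0" using ab that by (simp add: order_cone_def)
    ultimately show ?thesis using ab by (simp add: cone_comb)
  qed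
  have colc: "columns T = range c" by (auto simp: columns_def c_def)
  obtain B where B: "B \<subseteq> columns T" "independent B" "columns T \<subseteq> span B" "card B = 2"
    using basis_exists[of "columns T"] assms(2) by (metis column_rank_def)
  obtain p q where pq: "B = {p, q}" "p \<noteq> q" using B(4) card_2_iff by metis
  have finB: "finite B" using pq by simp
  have p0: "p \<noteq> 0" "q \<noteq> 0" using B(2) pq dependent_zero by auto
  have cspan: "c j \<in> span B" for j using B(3) colc by auto
  define al where "al g = representation B g p" for g
  define be where "be g = representation B g q" for g
  have dec: "g = al g *\<^sub>R p + be g *\<^sub>R q" if "g \<in> span B" for g
  proof -
    have "(\<Sum>v\<in>B. representation B g v *\<^sub>R v) = g"
      using sum_representation_eq[OF B(2) that finB] by simp
    then show ?thesis using pq by (simp add: al_def be_def)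
  qed
  have be_diff: "be (g - h) = be g - be h" if "g \<in> span B" "h \<in> span B" for g h
    using representation_diff[OF B(2) that(2) that(1)] by (simp add: be_def)
  have be0: "be 0 = 0" by (simp add: be_def representation_zero)
  have bep: "be p = 0" and beq: "be q = 1"
    using representation_basis[OF B(2)] pq by (auto simp: be_def)
  have alp: "al p = 1" and alq: "al q = 0"
    using representation_basis[OF B(2)] pq by (auto simp: al_def)
  define ell :: "real^'p1::{finite,order} \<Rightarrow> real" where "ell x = (\<Sum>k\<in>UNIV. x $ k)" for x
  have ell_lin: "ell (s *\<^sub>R x + t *\<^sub>R y) = s * ell x + t * ell y" for s t x y
    by (simp add: ell_def sum.distrib sum_distrib_left)
  have ell_diff: "ell (x - y) = ell x - ell y" for x y
    by (simp add: ell_def sum_subtractf)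
  have ell0: "ell 0 = 0" by (simp add: ell_def)
  define G where "G = (range c \<union> {c j' - c j | j j'. j \<le> j'}) - {0}"
  have finG: "finite G"
  proof -
    have "{c j' - c j | j j'. j \<le> j'} \<subseteq> (\<lambda>(j, j'). c j' - c j) ` UNIV" by auto
    then show ?thesis unfolding G_def by (meson finite finite_Diff finite_UnI finite_imageI finite_subset)
  qed
  have G_cone: "g \<in> order_cone" "g \<noteq> 0" if "g \<in> G" for g
    using that c_cone cd_cone unfolding G_def by auto
  have G_span: "g \<in> span B" if "g \<in> G" for g
    using that cspan unfolding G_def by (auto intro: span_diff)
  have ellG: "ell g > 0" if "g \<in> G" for g
    using ell_pos G_cone[OF that] by (simp add: ell_def)
  have pG: "p \<in> G" and qG: "q \<in> G"
    using B(1) pq p0 colc unfolding G_def by auto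
  define Q where "Q = ell q"
  have Qpos: "Q > 0" using ellG[OF qG] by (simp add: Q_def)
  define P where "P = ell p"
  have Ppos: "P > 0" using ellG[OF pG] by (simp add: P_def)
  define t where "t g = Q * be g / ell g" for g
  have Gne: "G \<noteq> {}" using pG by auto
  obtain u where uG: "u \<in> G" and tu: "t u = Min (t ` G)"
    using Min_in[of "t ` G"] finG Gne by (metis (mono_tags, lifting) empty_is_image finite_imageI imageE)
  obtain w where wG: "w \<in> G" and tw: "t w = Max (t ` G)"
    using Max_in[of "t ` G"] finG Gne by (metis (mono_tags, lifting) empty_is_image finite_imageI imageE)
  have tmin: "t u \<le> t g" if "g \<in> G" for g using tu finG that by simp
  have tmax: "t g \<le> t w" if "g \<in> G" for g using tw finG that by simp
  have tp: "t p = 0" by (simp add: t_def bep)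
  have tq: "t q = 1" using Qpos by (simp add: t_def beq Q_def)
  have tlt: "t u < t w" using tmin[OF pG] tmax[OF qG] tp tq by simp
  define X where "X g = (t w * ell g - Q * be g) / ((t w - t u) * ell u)" for g
  define Y where "Y g = (Q * be g - t u * ell g) / ((t w - t u) * ell w)" for g
  have ellsp: "ell g = al g * P + be g * Q" if "g \<in> span B" for g
    using ell_lin[of "al g" p "be g" q] dec[OF that] by (simp add: P_def Q_def)
  have rep: "g = X g *\<^sub>R u + Y g *\<^sub>R w" if "g \<in> span B" for g
  proof -
    have E: "X g * al u + Y g * al w = al g \<and> X g * be u + Y g * be w = be g"
      by (rule scal[OF ellsp[OF G_span[OF uG]] ellsp[OF G_span[OF wG]] ellsp[OF that]
          t_def t_def ellG[OF uG] ellG[OF wG] Ppos Qpos tlt X_def Y_def])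
    have "X g *\<^sub>R u + Y g *\<^sub>R w
        = X g *\<^sub>R (al u *\<^sub>R p + be u *\<^sub>R q) + Y g *\<^sub>R (al w *\<^sub>R p + be w *\<^sub>R q)"
      using dec[OF G_span[OF uG]] dec[OF G_span[OF wG]] by simp
    also have "\<dots> = (X g * al u + Y g * al w) *\<^sub>R p + (X g * be u + Y g * be w) *\<^sub>R q"
      by (simp add: algebra_simps)
    also have "\<dots> = g" using E dec[OF that] by simp
    finally show ?thesis by simp
  qed
  have Xnn: "X g \<ge> 0" "Y g \<ge> 0" if "g \<in> G" for g
  proof -
    have l: "ell g > 0" using ellG[OF that] .
    have "Q * be g / ell g \<le> t w" using tmax[OF that] by (simp add: t_def)
    then have "Q * be g \<le> t w * ell g" using l by (simp add: divide_le_eq mult.commute)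
    moreover have "(t w - t u) * ell u > 0" using tlt ellG[OF uG] by simp
    ultimately show "X g \<ge> 0" by (simp add: X_def)
    have "t u \<le> Q * be g / ell g" using tmin[OF that] by (simp add: t_def)
    then have "t u * ell g \<le> Q * be g" using l by (simp add: le_divide_eq)
    moreover have "(t w - t u) * ell w > 0" using tlt ellG[OF wG] by simp
    ultimately show "Y g \<ge> 0" by (simp add: Y_def)
  qed
  have Xdiff: "X (g - h) = X g - X h" "Y (g - h) = Y g - Y h" if "g \<in> span B" "h \<in> span B" for g h
    unfolding X_def Y_def be_diff[OF that] ell_diff
    by (simp_all only: diff_divide_distrib[symmetric], simp_all add: algebra_simps)
  have X0: "X 0 = 0" "Y 0 = 0" by (simp_all add: X_def Y_def be0 ell0)
  have XGz: "X g \<ge> 0 \<and> Y g \<ge> 0" if "g \<in> G \<or> g = 0" for g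
    using that Xnn X0 by auto
  define bx where "bx = (\<chi> j. X (c j))"
  define by' where "by' = (\<chi> j. Y (c j))"
  have cz: "c j \<in> G \<or> c j = 0" for j unfolding G_def by auto
  have cdz: "c j' - c j \<in> G \<or> c j' - c j = 0" if "j \<le> j'" for j j' unfolding G_def using that by auto
  have bx_cone: "bx \<in> order_cone" "by' \<in> order_cone"
  proof -
    have "X (c j) \<le> X (c j') \<and> Y (c j) \<le> Y (c j')" if "j \<le> j'" for j j'
      using XGz[OF cdz[OF that]] Xdiff[OF cspan cspan, of j' j] by simp
    then show "bx \<in> order_cone" "by' \<in> order_cone"
      using XGz[OF cz] by (auto simp: order_cone_def bx_def by'_def)
  qed
  have u_cone: "u \<in> order_cone" and w_cone: "w \<in> order_cone" using G_cone uG wG by auto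
  have T2: "T = outer_prod u bx + outer_prod w by'"
  proof -
    have "T $ k $ j = u $ k * X (c j) + w $ k * Y (c j)" for k j
    proof -
      have "T $ k $ j = c j $ k" by (simp add: c_def column_def)
      also have "\<dots> = (X (c j) *\<^sub>R u + Y (c j) *\<^sub>R w) $ k" using rep[OF cspan] by metis
      finally show ?thesis by (simp add: mult.commute)
    qed
    then show ?thesis by (simp add: vec_eq_iff outer_prod_def bx_def by'_def)
  qed
  have D2: "nd_decomp T 2"
    unfolding nd_decomp_def
  proof (intro exI conjI)
    show "\<forall>i<2. (if i = 0 then u else w) \<in> order_cone \<and> (if i = 0 then bx else by') \<in> order_cone"
      using u_cone w_cone bx_cone by auto
    show "T = (\<Sum>i<2. outer_prod (if i = 0 then u else w) (if i = (0::nat) then bx else by'))"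
      using T2 by (simp add: numeral_2_eq_2)
  qed
  have low: "2 \<le> n" if nd: "nd_decomp T n" for n
  proof (rule ccontr)
    assume "\<not> 2 \<le> n"
    then have "n = 0 \<or> n = 1" by auto
    then show False
    proof
      assume "n = 0"
      then have "T = 0" using nd by (simp add: nd_decomp_def)
      then show False using assms(2) by simp
    next
      assume "n = 1"
      then obtain a' b' where "T = outer_prod a' b'" using nd by (auto simp: nd_decomp_def)
      then show False using assms(2) rank_outer_le1[of a' b'] by simp
    qed
  qed
  show ?thesis unfolding nd_rank_def
    using D2 low by (intro Least_equality) auto
qed

end
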